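(* Let $n\ge 2$ and $q$ a prime power. The association scheme $\mathcal X(GU(n,q),\Phi(n,q))$ is commutative (i.e., $p_{ij}^h=p_{ji}^h$ for all $h,i,j$) if and only if $q=2$.
   Context: $\Phi(n,q)=\{x\in\mathbb{F}_{q^2}^n\setminus\{0\}:\langle x,x\rangle=0\}$ with $\langle x,y\rangle=\sum_k x_k y_k^{\,q}$. $\mathcal X(GU(n,q),\Phi(n,q))$ is the Schurian association scheme on $\Phi(n,q)$ whose relations are the orbitals (orbits on $\Phi(n,q)\times\Phi(n,q)$) of $GU(n,q)=\{U\in GL_n(\mathbb{F}_{q^2}):U\bar U^T=I\}$ acting by $x\mapsto xU$. For relations $R_h,R_i,R_j$, $p_{ij}^h=|\{z:(x,z)\in R_i,(z,y)\in R_j\}|$ for any $(x,y)\in R_h$. *)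

theory Defs
  imports "HOL-Analysis.Finite_Cartesian_Product" "HOL-Computational_Algebra.Primes"
begin

text \<open>The field F_{q^2} is modelled by a finite field type 'a with CARD('a) = q^2;
  vectors of length n by 'a^'n with CARD('n) = n; conjugation is x \<mapsto> x^q.\<close>

definition prime_power :: "nat \<Rightarrow> bool" where
  "prime_power q \<longleftrightarrow> (\<exists>p k. prime p \<and> k \<ge> 1 \<and> q = p ^ k)"

definition herm :: "nat \<Rightarrow> 'a::field ^ 'n \<Rightarrow> 'a ^ 'n \<Rightarrow> 'a" where
  "herm q x y = (\<Sum>k\<in>UNIV. x $ k * (y $ k) ^ q)"

definition Phi :: "nat \<Rightarrow> ('a::field ^ 'n) set" where
  "Phi q = {x. x \<noteq> 0 \<and> herm q x x = 0}"

definition conj_transpose :: "nat \<Rightarrow> 'a::field ^ 'n ^ 'n \<Rightarrow> 'a ^ 'n ^ 'n" where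
  "conj_transpose q U = (\<chi> i j. (U $ j $ i) ^ q)"

definition GU :: "nat \<Rightarrow> ('a::field ^ 'n ^ 'n) set" where
  "GU q = {U. U ** conj_transpose q U = mat 1}"

definition orbital :: "nat \<Rightarrow> 'a::field ^ 'n \<Rightarrow> 'a ^ 'n \<Rightarrow> (('a ^ 'n) \<times> ('a ^ 'n)) set" where
  "orbital q x y = {(x v* U, y v* U) | U. U \<in> (GU q :: ('a ^ 'n ^ 'n) set)}"

definition orbitals :: "nat \<Rightarrow> (('a::field ^ 'n) \<times> ('a ^ 'n)) set set" where
  "orbitals q = {orbital q x y | x y. x \<in> Phi q \<and> y \<in> Phi q}"

text \<open>Intersection number p_{ij}^h, computed at a chosen pair (x,y) in R_h.\<close>
definition isect_num :: "nat \<Rightarrow> (('a::field ^ 'n) \<times> ('a ^ 'n)) set \<Rightarrow>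
    (('a ^ 'n) \<times> ('a ^ 'n)) set \<Rightarrow> (('a ^ 'n) \<times> ('a ^ 'n)) set \<Rightarrow> nat" where
  "isect_num q Rh Ri Rj = (let (x, y) = (SOME p. p \<in> Rh) in
     card {z \<in> Phi q. (x, z) \<in> Ri \<and> (z, y) \<in> Rj})"

definition commutative_scheme :: "nat \<Rightarrow> ('a::field ^ 'n) itself \<Rightarrow> bool" where
  "commutative_scheme q T \<longleftrightarrow>
     (\<forall>Rh \<in> (orbitals q :: (('a ^ 'n) \<times> ('a ^ 'n)) set set). \<forall>Ri \<in> orbitals q. \<forall>Rj \<in> orbitals q.
        isect_num q Rh Ri Rj = isect_num q Rh Rj Ri)"

end

theory Submission
  imports Defs "HOL-Analysis.Cartesian_Space" "HOL-Number_Theory.Residues" "HOL-Computational_Algebra.Polynomial"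
begin

lemma sum_pow_frob:
  fixes f :: "'b \<Rightarrow> 'a::field"
  assumes fr: "\<And>a b::'a. (a+b)^q = a^q+b^q" and q: "q>0"
  shows "(sum f A)^q = sum (\<lambda>i. f i ^ q) A"
  by (induct A rule: infinite_finite_induct) (use q fr in auto)

lemma GU_entry:
  assumes "U \<in> GU q"
  shows "(\<Sum>k\<in>UNIV. U$i$k * (U$j$k)^q) = (if i = j then 1 else 0)"
proof -
  have "(U ** conj_transpose q U)$i$j = mat 1 $ i $ j" using assms by (simp add: GU_def)
  thus ?thesis by (simp add: matrix_matrix_mult_def conj_transpose_def mat_def)
qed

lemma herm_GU:
  fixes x y :: "'a::field ^ 'n"
  assumes fr: "\<And>a b::'a. (a+b)^q = a^q+b^q" and q: "q>0" and U: "U \<in> GU q"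
  shows "herm q (x v* U) (y v* U) = herm q x y"
proof -
  have "herm q (x v* U) (y v* U) = (\<Sum>k\<in>UNIV. (\<Sum>i\<in>UNIV. x$i * U$i$k) * (\<Sum>j\<in>UNIV. (y$j)^q * (U$j$k)^q))"
    by (simp add: herm_def vector_matrix_mult_def sum_pow_frob[OF fr q] power_mult_distrib)
  also have "\<dots> = (\<Sum>k\<in>UNIV. \<Sum>j\<in>UNIV. \<Sum>i\<in>UNIV. x$i * (y$j)^q * (U$i$k * (U$j$k)^q))"
    by (simp add: sum_distrib_left sum_distrib_right mult_ac)
  also have "\<dots> = (\<Sum>j\<in>UNIV. \<Sum>k\<in>UNIV. \<Sum>i\<in>UNIV. x$i * (y$j)^q * (U$i$k * (U$j$k)^q))"
    by (rule sum.swap)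
  also have "\<dots> = (\<Sum>j\<in>UNIV. \<Sum>i\<in>UNIV. \<Sum>k\<in>UNIV. x$i * (y$j)^q * (U$i$k * (U$j$k)^q))"
    by (rule sum.cong[OF refl], rule sum.swap)
  also have "\<dots> = (\<Sum>j\<in>UNIV. \<Sum>i\<in>UNIV. x$i * (y$j)^q * (if i = j then 1 else 0))"
    by (simp add: sum_distrib_left[symmetric] GU_entry[OF U])
  also have "\<dots> = herm q x y"
    by (simp add: herm_def if_distrib cong: if_cong)
  finally show ?thesis .
qed

lemma GU_rinv:
  assumes "U \<in> GU q"
  shows "(x v* U) v* conj_transpose q U = x"
  using assms by (simp add: vector_matrix_mul_assoc GU_def)

lemma mat1_GU:
  assumes "q > 0"
  shows "(mat 1 :: 'a::field^'n^'n) \<in> GU q"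
proof -
  have "conj_transpose q (mat 1 :: 'a::field^'n^'n) = mat 1"
    using assms by (auto simp: conj_transpose_def mat_def vec_eq_iff)
  thus ?thesis by (simp add: GU_def)
qed

lemma ct_mult:
  fixes U V :: "'a::field^'n^'n"
  assumes fr: "\<And>a b::'a. (a+b)^q = a^q+b^q" and q: "q>0"
  shows "conj_transpose q (U ** V) = conj_transpose q V ** conj_transpose q U"
  by (simp add: conj_transpose_def matrix_matrix_mult_def vec_eq_iff sum_pow_frob[OF fr q]
      power_mult_distrib mult.commute)

lemma GU_mult:
  fixes U V :: "'a::field^'n^'n"
  assumes fr: "\<And>a b::'a. (a+b)^q = a^q+b^q" and q: "q>0" and "U \<in> GU q" "V \<in> GU q"
  shows "U ** V \<in> GU q"
proof -
  have "U ** V ** conj_transpose q (U ** V) = U ** (V ** conj_transpose q V) ** conj_transpose q U"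
    by (simp add: ct_mult[OF fr q] matrix_mul_assoc)
  thus ?thesis using assms by (simp add: GU_def)
qed

lemma ct_ct:
  fixes U :: "'a::field^'n^'n"
  assumes "\<And>a::'a. a^(q*q) = a"
  shows "conj_transpose q (conj_transpose q U) = U"
  using assms by (simp add: conj_transpose_def vec_eq_iff power_mult[symmetric])

lemma GU_ct:
  fixes U :: "'a::field^'n^'n"
  assumes "\<And>a::'a. a^(q*q) = a" and "U \<in> GU q"
  shows "conj_transpose q U \<in> GU q"
  using assms matrix_left_right_inverse by (auto simp: GU_def ct_ct)

lemma Phi_GU:
  fixes x :: "'a::field ^ 'n"
  assumes fr: "\<And>a b::'a. (a+b)^q = a^q+b^q" and q: "q>0" and U: "U \<in> GU q" and x: "x \<in> Phi q"
  shows "x v* U \<in> Phi q"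
proof -
  have "x v* U \<noteq> 0"
  proof
    assume "x v* U = 0"
    hence "x = 0" using GU_rinv[OF U, of x] by (simp add: vector_matrix_mult_def vec_eq_iff)
    thus False using x by (simp add: Phi_def)
  qed
  thus ?thesis using x herm_GU[OF fr q U] by (simp add: Phi_def)
qed


lemma card_pow_eq_le:
  fixes b :: "'a::field"
  assumes "d > 0"
  shows "card {x. x^d = b} \<le> d"
proof -
  define p where "p = monom (1::'a) d + [:-b:]"
  have dp: "degree p = d" unfolding p_def using assms
    by (subst degree_add_eq_left) (auto simp: degree_monom_eq)
  hence "p \<noteq> 0" using assms by auto
  moreover have "{x. poly p x = 0} = {x. x^d = b}" by (auto simp: p_def poly_monom)
  ultimately show ?thesis using card_poly_roots_bound[of p] dp by simp
qed

lemma pow_card_same: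
  fixes x :: "'a::{field,finite}"
  shows "x ^ CARD('a) = x"
proof (cases "x = 0")
  case False
  have "x * (\<Prod>y\<in>UNIV-{0}. x * y) = x * x ^ (card (UNIV :: 'a set) - 1) * \<Prod>(UNIV-{0})"
    by (simp add: prod.distrib mult_ac)
  also have "x * x ^ (card (UNIV :: 'a set) - 1) = x ^ Suc (card (UNIV :: 'a set) - 1)"
    by (subst power_Suc) auto
  also have "Suc (card (UNIV :: 'a set) - 1) = card (UNIV :: 'a set)"
    using finite_UNIV_card_ge_0[where ?'a = 'a] by simp
  also have "(\<Prod>y\<in>UNIV-{0}. x * y) = (\<Prod>y\<in>UNIV-{0}. y)"
    by (rule prod.reindex_bij_witness[of _ "\<lambda>y. y / x" "\<lambda>y. x * y"]) (use False in auto)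
  finally show ?thesis
    by simp
qed (use finite_UNIV_card_ge_0[where ?'a = 'a] in auto)

lemma pow_card_minus1:
  fixes x :: "'a::{field,finite}"
  assumes "x \<noteq> 0"
  shows "x ^ (CARD('a) - 1) = 1"
proof -
  have "x * x ^ (CARD('a) - 1) = x * 1"
  proof -
    have "CARD('a) > 0" by simp
    then obtain m where m: "CARD('a) = Suc m" using gr0_implies_Suc by blast
    show ?thesis using pow_card_same[of x] by (simp add: m)
  qed
  thus ?thesis using assms by simp
qed

lemma pow_image:
  fixes d e :: nat
  assumes de: "d * e = CARD('a::{field,finite}) - 1" and d: "d > 0" and e: "e > 0"
  shows "(\<lambda>a::'a. a^d) ` (UNIV - {0}) = {b::'a. b^e = 1}" and "card {b::'a. b^e = 1} = e"
proof -
  let ?S = "{b::'a. b^e = 1}"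
  let ?I = "(\<lambda>a::'a. a^d) ` (UNIV - {0})"
  have sub: "?I \<subseteq> ?S"
  proof
    fix b assume "b \<in> ?I"
    then obtain a where a: "a \<noteq> 0" "b = a^d" by auto
    have "b^e = a^(d*e)" using a by (simp add: power_mult)
    thus "b \<in> ?S" using pow_card_minus1[OF a(1)] de by simp
  qed
  have cS: "card ?S \<le> e" using card_pow_eq_le[OF e, of 1] by simp
  have "UNIV - {0::'a} \<subseteq> (\<Union>b\<in>?I. {a. a^d = b})" by auto
  hence "card (UNIV - {0::'a}) \<le> card (\<Union>b\<in>?I. {a::'a. a^d = b})"
    by (intro card_mono) auto
  also have "\<dots> \<le> (\<Sum>b\<in>?I. card {a::'a. a^d = b})" by (rule card_UN_le) auto
  also have "\<dots> \<le> (\<Sum>b\<in>?I. d)" by (intro sum_mono card_pow_eq_le d)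
  also have "\<dots> = card ?I * d" by simp
  finally have "d * e \<le> card ?I * d" using de by (simp add: card_Diff_subset)
  hence "e \<le> card ?I" using d by (simp add: mult.commute)
  hence "card ?S \<le> card ?I" using cS by simp
  thus eq: "?I = ?S" using card_seteq[OF finite sub] by simp
  show "card ?S = e" using cS \<open>e \<le> card ?I\<close> eq by simp
qed

lemma char_facts:
  assumes pp: "prime_power q" and c: "CARD('a::{field,finite}) = q ^ 2"
  shows "\<exists>p k. prime p \<and> k \<ge> 1 \<and> q = p^k \<and> CHAR('a) = p"
proof -
  obtain p k where pk: "prime p" "k \<ge> 1" "q = p^k" using pp by (auto simp: prime_power_def)
  have cp: "prime CHAR('a)" by (rule prime_CHAR_semidom, rule finite_imp_CHAR_pos) simp
  have "CHAR('a) dvd p^(k*2)" using CHAR_dvd_CARD[where 'a='a] c pk by (simp add: power_mult)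
  hence "CHAR('a) dvd p" using prime_dvd_power[OF cp] by auto
  hence "CHAR('a) = p" using primes_dvd_imp_eq[OF cp pk(1)] by auto
  thus ?thesis using pk by blast
qed

lemma frob_add:
  assumes pp: "prime_power q" and c: "CARD('a::{field,finite}) = q ^ 2"
  shows "((a::'a) + b)^q = a^q + b^q"
proof -
  obtain p k where pk: "prime p" "k \<ge> 1" "q = p^k" "CHAR('a) = p" using char_facts[OF pp c] by blast
  have cp: "prime CHAR('a)" using pk by simp
  show ?thesis using freshmans_dream'[where 'a='a, OF cp, where m=q and n=k and x=a and y=b] pk by simp
qed

lemma q_pos: "prime_power q \<Longrightarrow> q > 0"
  by (auto simp: prime_power_def prime_gt_0_nat)

lemma frob_inv:
  assumes c: "CARD('a::{field,finite}) = q ^ 2"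
  shows "(a::'a)^(q*q) = a"
  using pow_card_same[of a] c by (simp add: power2_eq_square)


lemma herm_add_left: "herm q (x + y) z = herm q x z + herm q y z"
  by (simp add: herm_def distrib_right sum.distrib)

lemma herm_smult_left: "herm q (c *s x) y = c * herm q x y"
  by (simp add: herm_def sum_distrib_left mult.assoc)

lemma herm_add_right:
  assumes fr: "\<And>a b::'a::field. (a+b)^q = a^q+b^q"
  shows "herm q x (y + z) = herm q x y + herm q (x::'a^'n) z"
  by (simp add: herm_def fr distrib_left sum.distrib)

lemma herm_smult_right: "herm q x (c *s y) = c^q * herm q x y"
  by (simp add: herm_def sum_distrib_left power_mult_distrib mult_ac)

lemma herm_swap:
  assumes fr: "\<And>a b::'a::field. (a+b)^q = a^q+b^q" and q: "q > 0" and inv: "\<And>a::'a. a^(q*q) = a"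
  shows "herm q y x = (herm q x (y::'a^'n))^q"
proof -
  have "(herm q x y)^q = (\<Sum>k\<in>UNIV. (x$k)^q * (y$k)^(q*q))"
    by (simp add: herm_def sum_pow_frob[OF fr q] power_mult_distrib power_mult)
  also have "\<dots> = herm q y x" by (simp add: inv herm_def mult.commute)
  finally show ?thesis by simp
qed

lemma herm_axis:
  assumes "q > 0"
  shows "herm q x (axis k 1) = x $ k"
proof -
  have "\<And>i. x$i * (axis k 1 $ i)^q = (if i = k then x$k else 0)" using assms by (simp add: axis_def zero_power)
  thus ?thesis by (simp add: herm_def)
qed

lemma herm_zero_left [simp]: "herm q 0 x = 0"
  by (simp add: herm_def)

lemma herm_zero_right: "q > 0 \<Longrightarrow> herm q x 0 = 0"
  by (simp add: herm_def zero_power)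

lemma sum_two:
  fixes A B :: "'a::comm_monoid_add"
  assumes "i \<noteq> (j::'n::finite)"
  shows "(\<Sum>k\<in>UNIV. if k = i then A else if k = j then B else 0) = A + B"
proof -
  have "\<And>k. (if k = i then A else if k = j then B else 0) = (if k = i then A else 0) + (if k = j then B else 0)"
    using assms by auto
  hence "(\<Sum>k\<in>UNIV. if k = i then A else if k = j then B else 0) = (\<Sum>k\<in>UNIV. (if k = i then A else 0) + (if k = j then B else 0))"
    by simp
  also have "\<dots> = A + B" by (simp add: sum.distrib)
  finally show ?thesis .
qed

definition vec2 :: "'n \<Rightarrow> 'n \<Rightarrow> 'a::zero \<Rightarrow> 'a \<Rightarrow> 'a^'n" where
  "vec2 i j a b = (\<chi> k. if k = i then a else if k = j then b else 0)"

lemma herm_vec2: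
  assumes "i \<noteq> j" "q > 0"
  shows "herm q (vec2 i j a b) (vec2 i j c d) = a * c^q + b * (d::'a::field)^q"
proof -
  have "herm q (vec2 i j a b) (vec2 i j c d) = (\<Sum>k\<in>UNIV. if k = i then a * c^q else if k = j then b * d^q else 0)"
    unfolding herm_def vec2_def using assms by (intro sum.cong) auto
  thus ?thesis using sum_two[OF assms(1)] by simp
qed

lemma orbital_self:
  assumes "q > 0"
  shows "(x, y) \<in> orbital q x (y::'a::field^'n)"
  unfolding orbital_def using mat1_GU[OF assms, where 'a='a and 'n='n]
  by (auto intro!: exI[of _ "mat 1"])

theorem dir1:
  fixes q :: nat
  assumes pp: "prime_power q"
    and c: "CARD('a::{field,finite}) = q ^ 2"
    and n2: "CARD('n::finite) \<ge> 2"
    and comm: "commutative_scheme q TYPE('a ^ 'n)"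
  shows "q = 2"
proof (rule ccontr)
  assume q2: "q \<noteq> 2"
  have q0: "q > 0" by (rule q_pos[OF pp])
  have fr: "\<And>a b::'a. (a+b)^q = a^q+b^q" by (rule frob_add[OF pp c])
  have inv: "\<And>a::'a. a^(q*q) = a" by (rule frob_inv[OF c])
  obtain p k where pk: "prime p" "k \<ge> 1" "q = p^k" "CHAR('a) = p" using char_facts[OF pp c] by blast
  have "p \<ge> 2" using pk(1) prime_ge_2_nat by blast
  have "q \<ge> p" using pk by (metis one_le_numeral order_trans power_increasing power_one_right \<open>p\<ge>2\<close> le_trans)
  hence q3: "q \<ge> 3" using q2 \<open>p \<ge> 2\<close> by linarith
  have cq: "CARD('a) - 1 = (q+1)*(q-1)" using c q3 by (simp add: power2_eq_square algebra_simps)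
  obtain l :: 'a where l: "l \<noteq> 0" "l^(q+1) \<noteq> 1"
  proof -
    have "card {b::'a. b^(q+1) = 1} \<le> q+1" by (rule card_pow_eq_le) simp
    moreover have "card (UNIV - {0::'a}) = CARD('a) - 1" by (simp add: card_Diff_subset)
    moreover have "q + 1 < (q+1)*(q-1)"
    proof -
      have "q*q \<ge> 3*q" using q3 by simp
      moreover have "(q+1)*(q-1) = q*q - 1" using q3 by (simp add: algebra_simps)
      ultimately show ?thesis using q3 by linarith
    qed
    ultimately have "\<not> (UNIV - {0::'a}) \<subseteq> {b::'a. b^(q+1) = 1}"
      using cq by (metis card_mono finite leD le_trans)
    thus ?thesis using that by auto
  qed
  obtain t :: 'a where t: "t^(q+1) = -1"
  proof -
    have "(-1::'a)^(q-1) = 1"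
    proof (cases "even q")
      case True
      hence "2 dvd p^k" using pk by simp
      hence "2 dvd p" using prime_dvd_power[OF two_is_prime_nat] by blast
      hence "p = 2" using primes_dvd_imp_eq[OF two_is_prime_nat pk(1)] by simp
      hence m1: "(-1::'a) = 1" using pk(4) uminus_CHAR_2 by metis
      show ?thesis by (simp only: m1 power_one)
    next
      case False
      hence "even (q-1)" using q3 by simp
      thus ?thesis by simp
    qed
    hence "(-1::'a) \<in> (\<lambda>a::'a. a^(q+1)) ` (UNIV - {0})"
      using pow_image(1)[of "q+1" "q-1", where 'a='a] cq q3 by simp
    then obtain a where a: "(-1::'a) = a^(q+1)" by blast
    show ?thesis using that a by metis
  qed
  obtain z :: 'a where z: "z^(q+1) = 1" "z \<noteq> 1"
  proof -
    have "card {b::'a. b^(q+1) = 1} = q+1"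
      using pow_image(2)[of "q-1" "q+1", where 'a='a] cq q3 by (simp add: mult.commute)
    hence "\<not> {b::'a. b^(q+1) = 1} \<subseteq> {1}"
    proof (intro notI)
      assume "{b::'a. b^(q+1) = 1} \<subseteq> {1}"
      hence "card {b::'a. b^(q+1) = 1} \<le> card {1::'a}" by (intro card_mono) auto
      thus False using \<open>card {b::'a. b^(q+1) = 1} = q+1\<close> q3 by simp
    qed
    then obtain a where "a^(q+1) = (1::'a)" "a \<noteq> 1" by blast
    thus ?thesis using that by blast
  qed
  obtain i j :: 'n where ij: "i \<noteq> j"
    using n2 by (metis (full_types) card_le_Suc0_iff_eq finite not_less_eq_eq numeral_2_eq_2 order_trans)
  define x :: "'a^'n" where "x = vec2 i j 1 t"
  define y :: "'a^'n" where "y = vec2 i j 1 (z*t)"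
  have tq: "t * t^q = -1" using t by (simp add: power_Suc[symmetric] del: power_Suc)
  have hxx: "herm q x x = 0" using herm_vec2[OF ij q0, where 'a='a] tq by (simp add: x_def)
  have hyy: "herm q y y = 0"
  proof -
    have "z * t * (z*t)^q = (z * z^q) * (t * t^q)" by (simp add: power_mult_distrib mult_ac)
    also have "z * z^q = 1" using z(1) by (simp add: power_Suc[symmetric] del: power_Suc)
    finally show ?thesis using herm_vec2[OF ij q0, where 'a='a] tq by (simp add: y_def)
  qed
  define c0 where "c0 = herm q x y"
  have c0: "c0 \<noteq> 0"
  proof
    assume "c0 = 0"
    hence "1 + t * (z*t)^q = 0" using herm_vec2[OF ij q0, where 'a='a] by (simp add: c0_def x_def y_def)
    hence "1 + z^q * (t * t^q) = 0" by (simp add: power_mult_distrib mult_ac)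
    hence zq: "z^q = 1" using tq by simp
    have "z^(q+1) = z * z^q" by simp
    thus False using z zq by simp
  qed
  have x0: "x \<noteq> 0" by (auto simp: x_def vec2_def vec_eq_iff intro!: exI[of _ i])
  have y0: "y \<noteq> 0" by (auto simp: y_def vec2_def vec_eq_iff intro!: exI[of _ i])
  have xP: "x \<in> Phi q" using x0 hxx by (simp add: Phi_def)
  have yP: "y \<in> Phi q" using y0 hyy by (simp add: Phi_def)
  have lxP: "l *s x \<in> Phi q" using x0 hxx l by (simp add: Phi_def herm_smult_left herm_smult_right vec_eq_iff)
  define Rh where "Rh = orbital q x y"
  define Ri where "Ri = orbital q x (l *s x)"
  define Rj where "Rj = orbital q (l *s x) y"
  have orbs: "Rh \<in> orbitals q" "Ri \<in> orbitals q" "Rj \<in> orbitals q"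
    unfolding orbitals_def Rh_def Ri_def Rj_def using xP yP lxP by blast+
  have eqn: "isect_num q Rh Ri Rj = isect_num q Rh Rj Ri"
    using comm orbs unfolding commutative_scheme_def by blast
  have "(x,y) \<in> Rh" unfolding Rh_def by (rule orbital_self[OF q0])
  hence "(SOME p. p \<in> Rh) \<in> Rh" by (rule someI)
  then obtain x' y' where sp: "(SOME p. p \<in> Rh) = (x', y')" and "(x', y') \<in> Rh"
    by (metis surj_pair)
  then obtain U where U: "U \<in> GU q" "x' = x v* U" "y' = y v* U"
    unfolding Rh_def orbital_def by auto
  have hx'y': "herm q x' y' = c0" using U herm_GU[OF fr q0 U(1)] by (simp add: c0_def)
  have L: "isect_num q Rh Ri Rj = card {w \<in> Phi q. (x', w) \<in> Ri \<and> (w, y') \<in> Rj}"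
    by (simp add: isect_num_def sp)
  have R: "isect_num q Rh Rj Ri = card {w \<in> Phi q. (x', w) \<in> Rj \<and> (w, y') \<in> Ri}"
    by (simp add: isect_num_def sp)
  have m1: "(x', (l *s x) v* U) \<in> Ri" unfolding Ri_def orbital_def using U by blast
  have m2: "((l *s x) v* U, y') \<in> Rj" unfolding Rj_def orbital_def using U by blast
  have "(l *s x) v* U \<in> {w \<in> Phi q. (x', w) \<in> Ri \<and> (w, y') \<in> Rj}"
    using Phi_GU[OF fr q0 U(1) lxP] m1 m2 by simp
  hence "{w \<in> Phi q. (x', w) \<in> Ri \<and> (w, y') \<in> Rj} \<noteq> {}" by blast
  hence "isect_num q Rh Ri Rj \<noteq> 0" unfolding L by (simp add: card_eq_0_iff)
  moreover have "{w \<in> Phi q. (x', w) \<in> Rj \<and> (w, y') \<in> Ri} = {}"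
  proof (rule ccontr)
    assume "{w \<in> Phi q. (x', w) \<in> Rj \<and> (w, y') \<in> Ri} \<noteq> {}"
    then obtain w where w: "(x', w) \<in> Rj" "(w, y') \<in> Ri" by blast
    obtain V where V: "V \<in> GU q" "x' = (l *s x) v* V" "w = y v* V" using w(1) unfolding Rj_def orbital_def by auto
    obtain W where W: "W \<in> GU q" "w = x v* W" "y' = (l *s x) v* W" using w(2) unfolding Ri_def orbital_def by auto
    have "herm q x' w = l * c0" using herm_GU[OF fr q0 V(1)] V by (simp add: herm_smult_left c0_def)
    have "y' = l *s w" using W by (simp add: vector_matrix_mult_def vec_eq_iff sum_distrib_left mult.assoc)
    hence "herm q x' y' = l^q * (l * c0)" using \<open>herm q x' w = l * c0\<close> by (simp add: herm_smult_right)
    hence "c0 = l^(q+1) * c0" using hx'y' by (simp add: mult_ac)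
    thus False using c0 l by simp
  qed
  ultimately show False using eqn R by simp
qed


section \<open>GF(4) basics\<close>

lemma pp2: "prime_power 2"
  unfolding prime_power_def by (rule exI[of _ 2], rule exI[of _ 1]) simp

lemma F4_fr: "CARD('a::{field,finite}) = 4 \<Longrightarrow> ((a::'a) + b)^2 = a^2 + b^2"
  using frob_add[OF pp2, where 'a='a] by simp

lemma F4_p4: "CARD('a::{field,finite}) = 4 \<Longrightarrow> (a::'a)^4 = a"
  using pow_card_same[of a] by simp

lemma F4_cube: "CARD('a::{field,finite}) = 4 \<Longrightarrow> (a::'a) \<noteq> 0 \<Longrightarrow> a^3 = 1"
  using pow_card_minus1[of a] by simp

lemma F4_m1: "CARD('a::{field,finite}) = 4 \<Longrightarrow> (-1::'a) = 1"
proof -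
  assume c: "CARD('a) = 4"
  have "(-1::'a)^3 = 1" using F4_cube[OF c, of "-1"] by simp
  thus ?thesis by simp
qed

lemma F4_neg: "CARD('a::{field,finite}) = 4 \<Longrightarrow> -(a::'a) = a"
proof -
  assume c: "CARD('a) = 4"
  show ?thesis using arg_cong[OF F4_m1[OF c], of "\<lambda>t. t*a"] by simp
qed

lemma F4_two: "CARD('a::{field,finite}) = 4 \<Longrightarrow> (a::'a) + a = 0"
  using F4_neg[where 'a='a, of a] by (metis add.right_inverse)

lemma F4_minus: "CARD('a::{field,finite}) = 4 \<Longrightarrow> (a::'a) - b = a + b"
  using F4_neg[where 'a='a, of b] by (metis diff_conv_add_uminus)

definition om :: "'a::field" where "om = (SOME w. w^2 + w = 1)"

lemma F4_om: "CARD('a::{field,finite}) = 4 \<Longrightarrow> (om::'a)^2 + om = 1"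
proof -
  assume c: "CARD('a) = 4"
  have "\<exists>w::'a. w \<noteq> 0 \<and> w \<noteq> 1"
  proof (rule ccontr)
    assume "\<not> ?thesis"
    hence "UNIV \<subseteq> {0::'a, 1}" by auto
    hence "CARD('a) \<le> card {0::'a,1}" by (intro card_mono) auto
    also have "\<dots> \<le> 2" by (rule card_insert_le_m1) auto
    finally show False using c by simp
  qed
  then obtain w :: 'a where w: "w \<noteq> 0" "w \<noteq> 1" by blast
  have "w^3 = 1" using F4_cube[OF c w(1)] .
  hence "(w - 1) * (w^2 + w + 1) = 0" by (simp add: algebra_simps power2_eq_square power3_eq_cube)
  hence "w^2 + w + 1 = 0" using w(2) by simp
  hence "w^2 + w = -1" by (simp add: eq_neg_iff_add_eq_0 add.assoc)
  hence "w^2 + w = 1" using F4_m1[OF c] by simp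
  hence "\<exists>w::'a. w^2 + w = 1" by blast
  thus ?thesis unfolding om_def by (rule someI_ex)
qed

lemma F4_om0: "CARD('a::{field,finite}) = 4 \<Longrightarrow> (om::'a) \<noteq> 0"
  using F4_om[where 'a='a] by force

lemma F4_sqinj: "CARD('a::{field,finite}) = 4 \<Longrightarrow> (a::'a)^2 = b^2 \<Longrightarrow> a = b"
  by (metis F4_p4 power_mult num_double numeral_times_numeral power2_eq_square)

lemma F4_01: "CARD('a::{field,finite}) = 4 \<Longrightarrow> (h::'a)^2 = h \<Longrightarrow> h = 0 \<or> h = 1"
  by (metis power2_eq_square mult_cancel_right1 mult_eq_0_iff)

lemma F4_trace: "CARD('a::{field,finite}) = 4 \<Longrightarrow> (h::'a) = 0 \<or> h = 1 \<Longrightarrow> \<exists>s. s^2 + s = h"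
  using F4_om[where 'a='a] by (metis add_0 power_zero_numeral zero_power2)

abbreviation H where "H \<equiv> herm 2"

lemma H_swap: "CARD('a::{field,finite}) = 4 \<Longrightarrow> H y x = (H x (y::'a^'n))^2"
  using herm_swap[of 2 y x] F4_fr[where 'a='a] F4_p4[where 'a='a] by simp

lemma H_add_right: "CARD('a::{field,finite}) = 4 \<Longrightarrow> H x (y + z) = H x y + H x (z::'a^'n)"
  using herm_add_right[of 2 x y z] F4_fr[where 'a='a] by simp

lemma H_self01: "CARD('a::{field,finite}) = 4 \<Longrightarrow> H x (x::'a^'n) = 0 \<or> H x x = 1"
  using H_swap[of x x] F4_01[where 'a='a] by metis

lemma H_sum_left: "H (sum f A) z = (\<Sum>i\<in>A. H (f i) z)"
  by (induct A rule: infinite_finite_induct) (auto simp: herm_add_left)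

lemma H_sum_right: "CARD('a::{field,finite}) = 4 \<Longrightarrow> H z (sum f A) = (\<Sum>i\<in>A. H z (f i :: 'a^'n))"
  by (induct A rule: infinite_finite_induct) (auto simp: H_add_right herm_zero_right)


definition ON :: "'n set \<Rightarrow> ('n \<Rightarrow> ('a::field)^'n) \<Rightarrow> bool" where
  "ON S u \<longleftrightarrow> (\<forall>i\<in>S. \<forall>j\<in>S. H (u i) (u j) = (if i = j then 1 else 0))"

lemma herm_diff_left: "herm q (x - y) z = herm q x z - herm q y z"
  by (simp add: herm_def left_diff_distrib sum_subtractf)

lemma ON_set_card:
  fixes B :: "('a::{field,finite}^'n) set"
  assumes "\<And>b. b \<in> B \<Longrightarrow> H b b = 1" and "\<And>b c. b \<in> B \<Longrightarrow> c \<in> B \<Longrightarrow> b \<noteq> c \<Longrightarrow> H b c = 0"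
  shows "card B \<le> CARD('n)"
proof -
  have ind: "vec.independent B"
  proof (rule vec.independent_if_scalars_zero)
    show "finite B" by simp
    fix f x assume s: "(\<Sum>y\<in>B. f y *s y) = 0" and x: "x \<in> B"
    have "H (\<Sum>y\<in>B. f y *s y) x = (\<Sum>y\<in>B. f y * H y x)" by (simp add: H_sum_left herm_smult_left)
    also have "\<dots> = (\<Sum>y\<in>B. if y = x then f x else 0)"
      by (rule sum.cong) (use assms x in auto)
    also have "\<dots> = f x" using x by simp
    finally show "f x = 0" using s by simp
  qed
  have "card B \<le> card (cart_basis :: ('a^'n) set)"
    using vec.independent_span_bound[OF finite_cart_basis ind] by simp
  thus ?thesis by (simp add: card_cart_basis)
qed

lemma ext_step:
  fixes u :: "'n \<Rightarrow> 'a::{field,finite}^'n"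
  assumes c4: "CARD('a) = 4" and on: "ON S u" and k: "k \<notin> S"
  shows "\<exists>w. (\<forall>i\<in>S. H (u i) w = 0) \<and> H w w = 1"
proof -
  define P where "P v = v - (\<Sum>i\<in>S. H v (u i) *s u i)" for v
  have Pu: "H (P v) (u j) = 0" if j: "j \<in> S" for v j
  proof -
    have "(\<Sum>i\<in>S. H v (u i) * H (u i) (u j)) = (\<Sum>i\<in>S. if i = j then H v (u j) else 0)"
      by (rule sum.cong) (use on j in \<open>auto simp: ON_def\<close>)
    also have "\<dots> = H v (u j)" using j by simp
    finally show ?thesis by (simp add: P_def herm_diff_left H_sum_left herm_smult_left)
  qed
  have Pu': "H (u j) (P v) = 0" if "j \<in> S" for v j
    using H_swap[OF c4, of "P v" "u j"] Pu[OF that] by simp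
  have Pdec: "v = P v + (\<Sum>i\<in>S. H v (u i) *s u i)" for v by (simp add: P_def)
  have "\<exists>v0. P v0 \<noteq> 0"
  proof (rule ccontr)
    assume "\<not> ?thesis"
    hence "\<forall>v. v = (\<Sum>i\<in>S. H v (u i) *s u i)" using Pdec by simp
    hence "\<forall>v. v \<in> vec.span (u ` S)"
      by (metis (no_types, lifting) image_eqI vec.span_base vec.span_scale vec.span_sum)
    hence "cart_basis \<subseteq> vec.span (u ` S)" by blast
    hence "card (cart_basis :: ('a^'n) set) \<le> card (u ` S)"
      using vec.independent_span_bound[OF _ independent_cart_basis, of "u ` S"] by simp
    also have "\<dots> \<le> card S" by (rule card_image_le) simp
    also have "\<dots> < CARD('n)" using k by (intro psubset_card_mono) auto
    finally show False by (simp add: card_cart_basis)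
  qed
  then obtain v0 where v0: "P v0 \<noteq> 0" by blast
  define w0 where "w0 = P v0"
  have lin: "P (w0 + a *s v) = P w0 + a *s P v" for a v
    by (simp add: vec_eq_iff P_def herm_add_left herm_smult_left sum.distrib sum_distrib_left algebra_simps)
  have PP: "P (P v) = P v" for v
  proof -
    have "(\<Sum>i\<in>S. H (P v) (u i) *s u i) = 0" by (intro sum.neutral) (simp add: Pu)
    thus ?thesis by (simp add: P_def[of "P v"])
  qed
  have "\<exists>v. H (P v) (P v) \<noteq> 0"
  proof (rule ccontr)
    assume "\<not> ?thesis"
    hence iso: "H (P v) (P v) = 0" for v by simp
    have w0P: "P w0 = w0" by (simp add: w0_def PP)
    have hz: "H w0 (P v) = 0" for v
    proof -
      define h where "h = H w0 (P v)"
      have hs: "H (P v) w0 = h^2" using H_swap[OF c4] by (simp add: h_def)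
      have e: "H (P (w0 + a *s v)) (P (w0 + a *s v)) = a^2 * h + a * h^2" for a
      proof -
        have "H (P (w0 + a *s v)) (P (w0 + a *s v)) = H (w0 + a *s P v) (w0 + a *s P v)"
          by (simp add: lin w0P)
        also have "\<dots> = H w0 w0 + a^2 * H w0 (P v) + a * H (P v) w0 + a * a^2 * H (P v) (P v)"
          by (simp add: herm_add_left H_add_right[OF c4] herm_smult_left herm_smult_right algebra_simps)
        also have "\<dots> = a^2 * h + a * h^2"
          using iso[of v0] iso[of v] hs by (simp add: w0_def h_def)
        finally show ?thesis .
      qed
      have e1: "h + h^2 = 0" using e[of 1] iso by simp
      hence "h^2 = h" using F4_neg[OF c4, of h] by (metis add_eq_0_iff)
      have "om^2 * h + om * h^2 = (0::'a)" using e[of om] iso by simp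
      hence "(om^2 + om) * h = 0" using \<open>h^2 = h\<close> by (simp add: algebra_simps)
      thus ?thesis using F4_om[OF c4] by (simp add: h_def)
    qed
    have "H w0 v = 0" for v
    proof -
      have "H w0 v = H w0 (P v) + (\<Sum>i\<in>S. (H v (u i))^2 * H w0 (u i))"
        by (subst Pdec[of v]) (simp add: H_add_right[OF c4] H_sum_right[OF c4] herm_smult_right)
      also have "\<dots> = 0" using hz Pu by (simp add: w0_def)
      finally show ?thesis .
    qed
    hence "w0 $ j = 0" for j using herm_axis[of 2 w0 j] by simp
    hence "w0 = 0" by (simp add: vec_eq_iff)
    thus False using v0 w0_def by simp
  qed
  then obtain v where "H (P v) (P v) \<noteq> 0" by blast
  hence "H (P v) (P v) = 1" using H_self01[OF c4, of "P v"] by simp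
  thus ?thesis using Pu' by blast
qed

lemma ext_aux:
  fixes D :: "'n::finite set"
  assumes c4: "CARD('a::{field,finite}) = 4" and fin: "finite D"
  shows "\<forall>S (u :: 'n \<Rightarrow> 'a^'n). D = UNIV - S \<longrightarrow> ON S u \<longrightarrow> (\<exists>u'. ON UNIV u' \<and> (\<forall>i\<in>S. u' i = u i))"
  using fin
proof (induction D rule: finite_induct)
  case empty
  show ?case
  proof (intro allI impI)
    fix S and u :: "'n \<Rightarrow> 'a^'n"
    assume "{} = UNIV - S" "ON S u"
    moreover hence "S = UNIV" by auto
    ultimately show "\<exists>u'. ON UNIV u' \<and> (\<forall>i\<in>S. u' i = u i)" by auto
  qed
next
  case (insert k D)
  show ?case
  proof (intro allI impI)
    fix S and u :: "'n \<Rightarrow> 'a^'n"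
    assume D: "insert k D = UNIV - S" and on: "ON S u"
    have kS: "k \<notin> S" using D by auto
    obtain w where w: "\<forall>i\<in>S. H (u i) w = 0" "H w w = 1" using ext_step[OF c4 on kS] by blast
    define u1 where "u1 = u(k := w)"
    have wi: "H w (u i) = 0" if "i \<in> S" for i using H_swap[OF c4, of w "u i"] w that by simp
    have on1: "ON (insert k S) u1"
      using on w wi kS unfolding ON_def u1_def by auto
    have "D = UNIV - insert k S" using D insert.hyps by auto
    then obtain u' where "ON UNIV u'" "\<forall>i\<in>insert k S. u' i = u1 i" using insert.IH on1 by blast
    thus "\<exists>u'. ON UNIV u' \<and> (\<forall>i\<in>S. u' i = u i)" using kS by (auto simp: u1_def)
  qed
qed

lemma ON_extend:
  fixes u :: "'n \<Rightarrow> 'a::{field,finite}^'n"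
  assumes c4: "CARD('a) = 4" and "ON S u"
  shows "\<exists>u'. ON UNIV u' \<and> (\<forall>i\<in>S. u' i = u i)"
  using ext_aux[OF c4, of "UNIV - S"] assms by auto


lemma make_hyp:
  fixes x w :: "'a::{field,finite}^'n"
  assumes c4: "CARD('a) = 4" and xx: "H x x = 0" and g: "H x w \<noteq> 0"
  shows "\<exists>x'. H x x' = 1 \<and> H x' x' = 0 \<and> (\<forall>z. H z x = 0 \<longrightarrow> H z x' = (H x w)^2 * H z w)"
proof -
  define g where "g = H x w"
  have g3: "g^3 = 1" using F4_cube[OF c4] g by (simp add: g_def)
  have wx: "H w x = g^2" using H_swap[OF c4] by (simp add: g_def)
  obtain s where s: "s^2 + s = H w w" using F4_trace[OF c4 H_self01[OF c4, of w]] by blast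
  define x' where "x' = g *s w + s *s x"
  have "H x x' = g^2 * g" by (simp add: x'_def H_add_right[OF c4] herm_smult_right xx g_def)
  hence 1: "H x x' = 1" using g3 by (simp add: power2_eq_square power3_eq_cube mult_ac)
  have "H x' x' = g * (g^2 * H w w) + g * (s^2 * H w x) + s * (g^2 * H x w) + s * (s^2 * H x x)"
    by (simp add: x'_def H_add_right[OF c4] herm_add_left herm_smult_right herm_smult_left algebra_simps)
  also have "\<dots> = g^3 * (H w w + s^2 + s)"
    by (simp add: wx xx g_def[symmetric] power2_eq_square power3_eq_cube algebra_simps)
  also have "\<dots> = 0" using g3 s F4_two[OF c4, of "H w w"] by (simp add: add.assoc)
  finally have 2: "H x' x' = 0" .
  have 3: "H z x' = g^2 * H z w" if "H z x = 0" for z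
    using that by (simp add: x'_def H_add_right[OF c4] herm_smult_right)
  show ?thesis using 1 2 3 unfolding g_def by blast
qed

lemma F4_om3: "CARD('a::{field,finite}) = 4 \<Longrightarrow> (om::'a)^3 = 1"
  using F4_cube F4_om0 by blast

lemma F4_om4: "CARD('a::{field,finite}) = 4 \<Longrightarrow> (om::'a)^4 = om"
  using F4_p4 by blast

lemma hyp_ON:
  fixes x x' :: "'a::{field,finite}^'n"
  assumes c4: "CARD('a) = 4" and xx: "H x x = 0" and x'x': "H x' x' = 0" and xx': "H x x' = 1"
  defines "ua \<equiv> x' + om *s x" and "ub \<equiv> x' + om^2 *s x"
  shows "H ua ua = 1" "H ub ub = 1" "H ua ub = 0" "H ub ua = 0" "ua + ub = x" "om^2 *s ua + om *s ub = x'"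
proof -
  have x'x: "H x' x = 1" using H_swap[OF c4, of x' x] xx' by simp
  have w1: "(om::'a)^2 + om = 1" by (rule F4_om[OF c4])
  have w3: "(om::'a)^3 = 1" by (rule F4_om3[OF c4])
  have w4: "(om::'a)^4 = om" by (rule F4_om4[OF c4])
  have t: "\<And>a::'a. a + a = 0" by (rule F4_two[OF c4])
  have exp: "H (x' + a *s x) (x' + b *s x) = b^2 + a" for a b :: 'a
    by (simp add: H_add_right[OF c4] herm_add_left herm_smult_right herm_smult_left xx x'x' xx' x'x)
  show "H ua ua = 1" unfolding ua_def exp using w1 .
  show "H ub ub = 1" unfolding ub_def exp using w1 w4 by (simp add: power_mult[symmetric] add.commute)
  show "H ua ub = 0" unfolding ua_def ub_def exp using w4 t by (simp add: power_mult[symmetric])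
  show "H ub ua = 0" unfolding ua_def ub_def exp using t by simp
  have s1: "a + om * b + (a + om^2 * b) = b" for a b :: 'a
  proof -
    have "a + om * b + (a + om^2 * b) = (a + a) + (om^2 + om) * b" by (simp add: algebra_simps)
    thus ?thesis using t w1 by simp
  qed
  show "ua + ub = x" unfolding ua_def ub_def vec_eq_iff by (simp only: vector_add_component vector_smult_component s1 simp_thms)
  have s2: "om^2 * (a + om * b) + om * (a + om^2 * b) = a" for a b :: 'a
  proof -
    have "om^2 * (a + om * b) + om * (a + om^2 * b) = (om^2 + om) * a + (om^3 * b + om^3 * b)"
      by (simp add: algebra_simps power2_eq_square power3_eq_cube)
    thus ?thesis using t w1 by simp
  qed
  show "om^2 *s ua + om *s ub = x'" unfolding ua_def ub_def vec_eq_iff by (simp only: vector_add_component vector_smult_component s2 simp_thms)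
qed

lemma H_axis_s: "H z (c *s axis m 1) = c^2 * z $ m"
  by (simp add: herm_smult_right herm_axis)

lemma indep_w:
  fixes x y :: "'a::{field,finite}^'n"
  assumes c4: "CARD('a) = 4" and x0: "x \<noteq> 0" and ind: "\<forall>l. y \<noteq> l *s x"
  shows "\<exists>w. H x w \<noteq> 0 \<and> H y w = 0"
proof -
  have "\<exists>j k. y$j * x$k \<noteq> y$k * x$j"
  proof (rule ccontr)
    assume "\<not> ?thesis"
    hence e: "y$j * x$k = y$k * x$j" for j k by blast
    obtain k where k: "x$k \<noteq> 0" using x0 by (auto simp: vec_eq_iff)
    have "y = (y$k / x$k) *s x"
    proof (rule iffD2[OF vec_eq_iff], rule allI)
      fix j
      have "y$j = y$j * x$k / x$k" using k by simp
      also have "\<dots> = (y$k / x$k) * x$j" using e[of j k] by simp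
      finally show "y$j = ((y$k / x$k) *s x)$j" by simp
    qed
    thus False using ind by blast
  qed
  then obtain j k where jk: "y$j * x$k \<noteq> y$k * x$j" by blast
  define w where "w = (y$j)^2 *s axis k 1 + (y$k)^2 *s axis j 1"
  have p4: "\<And>a::'a. (a^2)^2 = a" using F4_p4[OF c4] by (simp add: power_mult[symmetric])
  have "H x w = y$j * x$k + y$k * x$j"
    by (simp add: w_def H_add_right[OF c4] H_axis_s p4 F4_p4[OF c4])
  moreover have "y$j * x$k + y$k * x$j \<noteq> 0"
  proof
    assume "y$j * x$k + y$k * x$j = 0"
    hence "y$j * x$k = - (y$k * x$j)" by (simp add: eq_neg_iff_add_eq_0)
    thus False using jk F4_neg[OF c4] by simp
  qed
  moreover have "H y w = y$j * y$k + y$k * y$j"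
    by (simp add: w_def H_add_right[OF c4] H_axis_s p4 F4_p4[OF c4])
  hence "H y w = 0" using F4_two[OF c4] by (simp add: mult.commute)
  ultimately show ?thesis by (intro exI[of _ w]) simp
qed


lemma ON2:
  fixes ua ub :: "'a::{field,finite}^'n"
  assumes c4: "CARD('a) = 4" and "H ua ua = 1" "H ub ub = 1" "H ua ub = 0" "H ub ua = 0" and ab: "a \<noteq> b"
  shows "\<exists>u. ON UNIV u \<and> u a = ua \<and> u b = ub"
proof -
  define u0 where "u0 = (\<lambda>i. if i = a then ua else ub)"
  have "ON {a,b} u0" using assms unfolding ON_def u0_def by auto
  then obtain u where "ON UNIV u" "\<forall>i\<in>{a,b}. u i = u0 i" using ON_extend[OF c4] by blast
  thus ?thesis using ab by (auto simp: u0_def)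
qed

lemma ON4:
  fixes ua ub uc ud :: "'a::{field,finite}^'n"
  assumes c4: "CARD('a) = 4"
    and "H ua ua = 1" "H ub ub = 1" "H uc uc = 1" "H ud ud = 1"
    and "H ua ub = 0" "H ua uc = 0" "H ua ud = 0" "H ub ua = 0" "H ub uc = 0" "H ub ud = 0"
    and "H uc ua = 0" "H uc ub = 0" "H uc ud = 0" "H ud ua = 0" "H ud ub = 0" "H ud uc = 0"
    and d: "a \<noteq> b" "a \<noteq> c" "a \<noteq> d" "b \<noteq> c" "b \<noteq> d" "c \<noteq> d"
  shows "\<exists>u. ON UNIV u \<and> u a = ua \<and> u b = ub \<and> u c = uc \<and> u d = ud"
proof -
  define u0 where "u0 = (\<lambda>i. if i = a then ua else if i = b then ub else if i = c then uc else ud)"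
  have "ON {a,b,c,d} u0" using assms unfolding ON_def u0_def by auto
  then obtain u where "ON UNIV u" "\<forall>i\<in>{a,b,c,d}. u i = u0 i" using ON_extend[OF c4] by blast
  thus ?thesis using d by (auto simp: u0_def)
qed

lemma shapeA:
  fixes x :: "'a::{field,finite}^'n"
  assumes c4: "CARD('a) = 4" and x: "x \<in> Phi 2" and ab: "a \<noteq> b"
  shows "\<exists>u. ON UNIV u \<and> x = u a + u b"
proof -
  obtain k where k: "x$k \<noteq> 0" using x by (auto simp: Phi_def vec_eq_iff)
  have "H x (axis k 1) \<noteq> 0" using k herm_axis[of 2 x k] by simp
  moreover have xx: "H x x = 0" using x by (simp add: Phi_def)
  ultimately obtain x' where x': "H x x' = 1" "H x' x' = 0" using make_hyp[OF c4 xx] by blast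
  note h = hyp_ON[OF c4 xx x'(2) x'(1)]
  obtain u where "ON UNIV u" "u a = x' + om *s x" "u b = x' + om^2 *s x"
    using ON2[OF c4 h(1-4) ab] by blast
  thus ?thesis using h(5) by auto
qed

lemma shapeB:
  fixes x y :: "'a::{field,finite}^'n"
  assumes c4: "CARD('a) = 4" and x: "x \<in> Phi 2" and y: "y \<in> Phi 2" and c: "H x y = c" "c \<noteq> 0" and ab: "a \<noteq> b"
  shows "\<exists>u. ON UNIV u \<and> x = u a + u b \<and> y = c^2 *s (om^2 *s u a + om *s u b)"
proof -
  have c3: "c^3 = 1" using F4_cube[OF c4 c(2)] .
  define y1 where "y1 = c *s y"
  have xx: "H x x = 0" using x by (simp add: Phi_def)
  have yy: "H y y = 0" using y by (simp add: Phi_def)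
  have "H x y1 = c^2 * c" by (simp add: y1_def herm_smult_right c(1))
  hence xy1: "H x y1 = 1" using c3 by (simp add: power2_eq_square power3_eq_cube mult_ac)
  have y1y1: "H y1 y1 = 0" by (simp add: y1_def herm_smult_right herm_smult_left yy)
  note h = hyp_ON[OF c4 xx y1y1 xy1]
  obtain u where u: "ON UNIV u" "u a = y1 + om *s x" "u b = y1 + om^2 *s x"
    using ON2[OF c4 h(1-4) ab] by blast
  have "y = c^2 *s y1" using c3 by (simp add: y1_def vector_smult_assoc power2_eq_square power3_eq_cube mult_ac)
  thus ?thesis using u h(5,6) by metis
qed

lemma cross0:
  fixes p q r s :: "'a::{field,finite}^'n"
  assumes c4: "CARD('a) = 4" and "H p r = 0" "H p s = 0" "H q r = 0" "H q s = 0"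
  shows "H (p + a *s q) (r + b *s s) = 0"
  using assms by (simp add: H_add_right[OF c4] herm_add_left herm_smult_left herm_smult_right)

lemma C_data:
  fixes x y :: "'a::{field,finite}^'n"
  assumes c4: "CARD('a) = 4" and x: "x \<in> Phi 2" and y: "y \<in> Phi 2" and xy: "H x y = 0"
    and ind: "\<forall>l. y \<noteq> l *s x"
  shows "\<exists>ua ub uc ud. H ua ua = 1 \<and> H ub ub = 1 \<and> H uc uc = 1 \<and> H ud ud = 1 \<and>
     H ua ub = 0 \<and> H ua uc = 0 \<and> H ua ud = 0 \<and> H ub ua = 0 \<and> H ub uc = 0 \<and> H ub ud = 0 \<and>
     H uc ua = 0 \<and> H uc ub = 0 \<and> H uc ud = 0 \<and> H ud ua = 0 \<and> H ud ub = 0 \<and> H ud uc = 0 \<and>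
     x = ua + ub \<and> y = uc + ud"
proof -
  have xx: "H x x = 0" and x0: "x \<noteq> 0" using x by (auto simp: Phi_def)
  have yy: "H y y = 0" and y0: "y \<noteq> 0" using y by (auto simp: Phi_def)
  have yx: "H y x = 0" using H_swap[OF c4, of y x] xy by simp
  obtain w1 where w1: "H x w1 \<noteq> 0" "H y w1 = 0" using indep_w[OF c4 x0 ind] by blast
  obtain x' where x': "H x x' = 1" "H x' x' = 0" "\<forall>z. H z x = 0 \<longrightarrow> H z x' = (H x w1)^2 * H z w1"
    using make_hyp[OF c4 xx w1(1)] by blast
  have yx': "H y x' = 0" using x'(3) yx w1(2) by simp
  have x'x: "H x' x = 1" using H_swap[OF c4, of x' x] x'(1) by simp
  have x'y: "H x' y = 0" using H_swap[OF c4, of x' y] yx' by simp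
  have ind2: "\<forall>l. x \<noteq> l *s y"
  proof
    fix l show "x \<noteq> l *s y"
    proof
      assume e: "x = l *s y"
      hence "l \<noteq> 0" using x0 by auto
      hence "y = (1/l) *s x" using e by (simp add: vector_smult_assoc)
      thus False using ind by blast
    qed
  qed
  obtain w2 where w2: "H y w2 \<noteq> 0" "H x w2 = 0" using indep_w[OF c4 y0 ind2] by blast
  define t where "t = (H x' w2)^2"
  define w3 where "w3 = w2 + t *s x"
  have "H x' w3 = H x' w2 + t^2" by (simp add: w3_def H_add_right[OF c4] herm_smult_right x'x)
  also have "t^2 = H x' w2" using F4_p4[OF c4] by (simp add: t_def power_mult[symmetric])
  finally have x'w3: "H x' w3 = 0" using F4_two[OF c4] by simp
  have yw3: "H y w3 \<noteq> 0" using w2 by (simp add: w3_def H_add_right[OF c4] herm_smult_right yx)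
  have xw3: "H x w3 = 0" using w2 by (simp add: w3_def H_add_right[OF c4] herm_smult_right xx)
  obtain y' where y': "H y y' = 1" "H y' y' = 0" "\<forall>z. H z y = 0 \<longrightarrow> H z y' = (H y w3)^2 * H z w3"
    using make_hyp[OF c4 yy yw3] by blast
  have xy': "H x y' = 0" using y'(3) xy xw3 by simp
  have x'y': "H x' y' = 0" using y'(3) x'y x'w3 by simp
  have y'x: "H y' x = 0" using H_swap[OF c4, of y' x] xy' by simp
  have y'x': "H y' x' = 0" using H_swap[OF c4, of y' x'] x'y' by simp
  note hx = hyp_ON[OF c4 xx x'(2) x'(1)]
  note hy = hyp_ON[OF c4 yy y'(2) y'(1)]
  note cr1 = cross0[OF c4 x'y' x'y xy' xy]
  note cr2 = cross0[OF c4 y'x' y'x yx' yx]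
  show ?thesis
    apply (rule exI[of _ "x' + om *s x"], rule exI[of _ "x' + om^2 *s x"])
    apply (rule exI[of _ "y' + om *s y"], rule exI[of _ "y' + om^2 *s y"])
    using hx hy cr1 cr2 by simp
qed

lemma C_card:
  fixes ua ub uc ud :: "'a::{field,finite}^'n"
  assumes "H ua ua = 1" "H ub ub = 1" "H uc uc = 1" "H ud ud = 1"
    and "H ua ub = 0" "H ua uc = 0" "H ua ud = 0" "H ub ua = 0" "H ub uc = 0" "H ub ud = 0"
    and "H uc ua = 0" "H uc ub = 0" "H uc ud = 0" "H ud ua = 0" "H ud ub = 0" "H ud uc = 0"
  shows "CARD('n) \<ge> 4"
proof -
  have d: "ua \<noteq> ub" "ua \<noteq> uc" "ua \<noteq> ud" "ub \<noteq> uc" "ub \<noteq> ud" "uc \<noteq> ud"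
    using assms by (metis zero_neq_one)+
  have "card {ua,ub,uc,ud} \<le> CARD('n)"
    by (rule ON_set_card) (use assms in auto)
  moreover have "card {ua,ub,uc,ud} = 4" using d by simp
  ultimately show ?thesis by simp
qed

lemma four_idx:
  assumes "CARD('n::finite) \<ge> 4"
  shows "\<exists>a b c d::'n. a \<noteq> b \<and> a \<noteq> c \<and> a \<noteq> d \<and> b \<noteq> c \<and> b \<noteq> d \<and> c \<noteq> d"
proof -
  obtain a :: 'n where True by blast
  have "card (UNIV - {a}) \<ge> 3" using assms by (simp add: card_Diff_subset)
  then obtain T where T: "T \<subseteq> UNIV - {a}" "card T = 3" by (meson obtain_subset_with_card_n)
  then obtain b c d where "T = {b,c,d}" "b \<noteq> c" "c \<noteq> d" "b \<noteq> d" by (auto simp: card_3_iff)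
  thus ?thesis using T(1) by blast
qed

lemma two_idx:
  assumes "CARD('n::finite) \<ge> 2"
  shows "\<exists>a b::'n. a \<noteq> b"
  using assms by (metis (full_types) card_le_Suc0_iff_eq finite not_less_eq_eq numeral_2_eq_2 order_trans)

lemma shapeC:
  fixes x y :: "'a::{field,finite}^'n"
  assumes c4: "CARD('a) = 4" and x: "x \<in> Phi 2" and y: "y \<in> Phi 2" and xy: "H x y = 0"
    and ind: "\<forall>l. y \<noteq> l *s x"
    and d: "a \<noteq> b" "a \<noteq> c" "a \<noteq> d" "b \<noteq> c" "b \<noteq> d" "c \<noteq> d"
  shows "\<exists>u. ON UNIV u \<and> x = u a + u b \<and> y = u c + u d"
proof -
  obtain ua ub uc ud where h: "H ua ua = 1" "H ub ub = 1" "H uc uc = 1" "H ud ud = 1"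
     "H ua ub = 0" "H ua uc = 0" "H ua ud = 0" "H ub ua = 0" "H ub uc = 0" "H ub ud = 0"
     "H uc ua = 0" "H uc ub = 0" "H uc ud = 0" "H ud ua = 0" "H ud ub = 0" "H ud uc = 0"
     "x = ua + ub" "y = uc + ud"
    using C_data[OF c4 x y xy ind] by blast
  obtain u where "ON UNIV u" "u a = ua" "u b = ub" "u c = uc" "u d = ud"
    using ON4[OF c4 h(1-16) d] by blast
  thus ?thesis using h(17,18) by blast
qed


definition Mx :: "('n \<Rightarrow> 'a^'n) \<Rightarrow> 'a::field^'n^'n" where "Mx u = (\<chi> i. u i)"

lemma Mx_GU:
  fixes u :: "'n \<Rightarrow> 'a::{field,finite}^'n"
  assumes "ON UNIV u"
  shows "Mx u \<in> GU 2"
proof -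
  have "(Mx u ** conj_transpose 2 (Mx u)) $ i $ j = mat 1 $ i $ j" for i j
    using assms by (simp add: Mx_def matrix_matrix_mult_def conj_transpose_def mat_def ON_def herm_def)
  thus ?thesis by (simp add: GU_def vec_eq_iff)
qed

lemma axis_Mx: "axis k 1 v* Mx u = u k"
proof -
  have "(axis k 1 v* Mx u) $ j = u k $ j" for j
  proof -
    have "\<And>i. (axis k 1 $ i) * (u i $ j) = (if i = k then u k $ j else 0)" by (simp add: axis_def)
    thus ?thesis by (simp add: vector_matrix_mult_def Mx_def)
  qed
  thus ?thesis by (simp add: vec_eq_iff)
qed

lemma u_ctMx:
  fixes u :: "'n \<Rightarrow> 'a::{field,finite}^'n"
  assumes "ON UNIV u"
  shows "u k v* conj_transpose 2 (Mx u) = axis k 1"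
proof -
  have "(u k v* conj_transpose 2 (Mx u)) $ j = axis k 1 $ j" for j
    using assms by (simp add: vector_matrix_mult_def Mx_def conj_transpose_def ON_def herm_def axis_def)
  thus ?thesis by (simp add: vec_eq_iff)
qed

lemma transfer:
  fixes u u' :: "'n \<Rightarrow> 'a::{field,finite}^'n"
  assumes c4: "CARD('a) = 4" and "ON UNIV u" "ON UNIV u'"
  shows "\<exists>T \<in> GU 2. \<forall>k. u k v* T = u' k"
proof -
  have fr: "\<And>a b::'a. (a+b)^2 = a^2+b^2" by (rule F4_fr[OF c4])
  have inv: "\<And>a::'a. a^(2*2) = a" using F4_p4[OF c4] by simp
  define T where "T = conj_transpose 2 (Mx u) ** Mx u'"
  have "T \<in> GU 2" unfolding T_def
    by (rule GU_mult[OF fr _ GU_ct[OF inv Mx_GU[OF assms(2)]] Mx_GU[OF assms(3)]]) simp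
  moreover have "u k v* T = u' k" for k
    unfolding T_def by (simp add: vector_matrix_mul_assoc[symmetric] u_ctMx[OF assms(2)] axis_Mx)
  ultimately show ?thesis by blast
qed

lemma vm_smult: "(c *s v) v* A = c *s (v v* (A::'a::comm_semiring_1^'m^'n))"
  by (simp add: vector_matrix_mult_def vec_eq_iff sum_distrib_left mult.assoc)

definition cj :: "'a::field^'n \<Rightarrow> 'a^'n" where "cj v = (\<chi> k. (v$k)^2)"

lemma cj_cj: "CARD('a::{field,finite}) = 4 \<Longrightarrow> cj (cj v) = (v::'a^'n)"
  by (simp add: cj_def vec_eq_iff power_mult[symmetric] F4_p4)

lemma H_cj: "CARD('a::{field,finite}) = 4 \<Longrightarrow> H (cj y) (cj x) = H x (y::'a^'n)"
  by (simp add: cj_def herm_def power_mult[symmetric] F4_p4 mult.commute)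

lemma cj_smult: "cj (l *s x) = l^2 *s cj x"
  by (simp add: cj_def vec_eq_iff power_mult_distrib)

lemma cj_Phi:
  assumes c4: "CARD('a::{field,finite}) = 4" and x: "(x::'a^'n) \<in> Phi 2"
  shows "cj x \<in> Phi 2"
proof -
  have "H (cj x) (cj x) = H x x" by (rule H_cj[OF c4])
  moreover have "cj x \<noteq> 0"
  proof
    assume "cj x = 0"
    hence "x = 0" using cj_cj[OF c4, of x] by (simp add: cj_def vec_eq_iff)
    thus False using x by (simp add: Phi_def)
  qed
  ultimately show ?thesis using x by (simp add: Phi_def)
qed

lemma swap_GU:
  fixes x y :: "'a::{field,finite}^'n"
  assumes c4: "CARD('a) = 4" and n2: "CARD('n) \<ge> 2" and x: "x \<in> Phi 2" and y: "y \<in> Phi 2"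
  shows "\<exists>T \<in> GU 2. x v* T = cj y \<and> y v* T = cj x"
proof -
  obtain a b :: 'n where ab: "a \<noteq> b" using two_idx[OF n2] by blast
  have x0: "x \<noteq> 0" using x by (simp add: Phi_def)
  have y0: "y \<noteq> 0" using y by (simp add: Phi_def)
  have cx: "cj x \<in> Phi 2" by (rule cj_Phi[OF c4 x])
  have cy: "cj y \<in> Phi 2" by (rule cj_Phi[OF c4 y])
  show ?thesis
  proof (cases "\<exists>l. y = l *s x")
    case True
    then obtain l where l: "y = l *s x" by blast
    have l0: "l \<noteq> 0" using y0 l by auto
    have "cj x = l *s cj y"
      using F4_cube[OF c4 l0] by (simp add: l cj_smult vector_smult_assoc power2_eq_square power3_eq_cube mult_ac)
    moreover obtain u where u: "ON UNIV u" "x = u a + u b" using shapeA[OF c4 x ab] by blast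
    moreover obtain u' where u': "ON UNIV u'" "cj y = u' a + u' b" using shapeA[OF c4 cy ab] by blast
    moreover obtain T where "T \<in> GU 2" "\<forall>k. u k v* T = u' k" using transfer[OF c4 u(1) u'(1)] by blast
    ultimately show ?thesis using l
      by (intro bexI[of _ T]) (auto simp: vector_matrix_left_distrib vm_smult)
  next
    case nl: False
    show ?thesis
    proof (cases "H x y = 0")
      case False
      define c where "c = H x y"
      have c0: "c \<noteq> 0" using False by (simp add: c_def)
      have c': "H (cj y) (cj x) = c" using H_cj[OF c4] by (simp add: c_def)
      obtain u where u: "ON UNIV u" "x = u a + u b" "y = c^2 *s (om^2 *s u a + om *s u b)"
        using shapeB[OF c4 x y c_def[symmetric] c0 ab] by blast
      obtain u' where u': "ON UNIV u'" "cj y = u' a + u' b" "cj x = c^2 *s (om^2 *s u' a + om *s u' b)"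
        using shapeB[OF c4 cy cx c' c0 ab] by blast
      obtain T where T: "T \<in> GU 2" "\<forall>k. u k v* T = u' k" using transfer[OF c4 u(1) u'(1)] by blast
      show ?thesis using T u u'
        by (intro bexI[of _ T]) (auto simp: vector_matrix_left_distrib vm_smult)
    next
      case True
      have ind: "\<forall>l. y \<noteq> l *s x" using nl by blast
      have ind': "\<forall>l. cj x \<noteq> l *s cj y"
      proof
        fix l show "cj x \<noteq> l *s cj y"
        proof
          assume e: "cj x = l *s cj y"
          hence "x = l^2 *s y" using cj_cj[OF c4, of x] cj_cj[OF c4, of y] by (metis cj_smult)
          hence "l \<noteq> 0" using x0 by auto
          hence "y = (1/l^2) *s x" using \<open>x = l^2 *s y\<close> by (simp add: vector_smult_assoc)
          thus False using ind by blast
        qed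
      qed
      have c': "H (cj y) (cj x) = 0" using H_cj[OF c4, of y x] True by simp
      obtain ua ub uc ud :: "'a^'n" where h: "H ua ua = 1" "H ub ub = 1" "H uc uc = 1" "H ud ud = 1"
         "H ua ub = 0" "H ua uc = 0" "H ua ud = 0" "H ub ua = 0" "H ub uc = 0" "H ub ud = 0"
         "H uc ua = 0" "H uc ub = 0" "H uc ud = 0" "H ud ua = 0" "H ud ub = 0" "H ud uc = 0"
        using C_data[OF c4 x y True ind] by blast
      have "CARD('n) \<ge> 4" by (rule C_card[OF h])
      then obtain a b c d :: 'n where d: "a \<noteq> b" "a \<noteq> c" "a \<noteq> d" "b \<noteq> c" "b \<noteq> d" "c \<noteq> d"
        using four_idx by blast
      obtain u where u: "ON UNIV u" "x = u a + u b" "y = u c + u d"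
        using shapeC[OF c4 x y True ind d] by blast
      obtain u' where u': "ON UNIV u'" "cj y = u' a + u' b" "cj x = u' c + u' d"
        using shapeC[OF c4 cy cx c' ind' d] by blast
      obtain T where T: "T \<in> GU 2" "\<forall>k. u k v* T = u' k" using transfer[OF c4 u(1) u'(1)] by blast
      show ?thesis using T u u'
        by (intro bexI[of _ T]) (auto simp: vector_matrix_left_distrib)
    qed
  qed
qed


lemma orbital_GU:
  fixes x y p r :: "'a::field^'n"
  assumes fr: "\<And>a b::'a. (a+b)^q = a^q+b^q" and q: "q>0"
    and pr: "(p, r) \<in> orbital q x y" and U: "U \<in> GU q"
  shows "(p v* U, r v* U) \<in> orbital q x y"
proof -
  obtain V where V: "V \<in> GU q" "p = x v* V" "r = y v* V" using pr unfolding orbital_def by auto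
  have "V ** U \<in> GU q" by (rule GU_mult[OF fr q V(1) U])
  thus ?thesis unfolding orbital_def using V by (auto simp: vector_matrix_mul_assoc)
qed

lemma orb_facts:
  fixes R :: "(('a::{field,finite}^'n) \<times> ('a^'n)) set"
  assumes c4: "CARD('a) = 4" and n2: "CARD('n) \<ge> 2" and R: "R \<in> orbitals 2"
  shows orb_Phi: "\<And>p r. (p, r) \<in> R \<Longrightarrow> p \<in> Phi 2 \<and> r \<in> Phi 2"
    and orb_GU: "\<And>p r U. (p, r) \<in> R \<Longrightarrow> U \<in> GU 2 \<Longrightarrow> (p v* U, r v* U) \<in> R"
    and orb_cj: "\<And>p r. (p, r) \<in> R \<Longrightarrow> (cj r, cj p) \<in> R"
proof -
  have fr: "\<And>a b::'a. (a+b)^2 = a^2+b^2" by (rule F4_fr[OF c4])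
  have q0: "(2::nat) > 0" by simp
  obtain x0 y0 where R0: "R = orbital 2 x0 y0" "x0 \<in> Phi 2" "y0 \<in> Phi 2"
    using R unfolding orbitals_def by blast
  show P: "\<And>p r. (p, r) \<in> R \<Longrightarrow> p \<in> Phi 2 \<and> r \<in> Phi 2"
  proof -
    fix p r assume "(p, r) \<in> R"
    then obtain U where "U \<in> GU 2" "p = x0 v* U" "r = y0 v* U" using R0 unfolding orbital_def by auto
    thus "p \<in> Phi 2 \<and> r \<in> Phi 2" using Phi_GU[OF fr q0 _ R0(2)] Phi_GU[OF fr q0 _ R0(3)] by simp
  qed
  show G: "\<And>p r U. (p, r) \<in> R \<Longrightarrow> U \<in> GU 2 \<Longrightarrow> (p v* U, r v* U) \<in> R"
    using orbital_GU[OF fr q0] R0(1) by simp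
  show "\<And>p r. (p, r) \<in> R \<Longrightarrow> (cj r, cj p) \<in> R"
  proof -
    fix p r assume pr: "(p, r) \<in> R"
    obtain T where T: "T \<in> GU 2" "p v* T = cj r" "r v* T = cj p"
      using swap_GU[OF c4 n2 conjunct1[OF P[OF pr]] conjunct2[OF P[OF pr]]] by blast
    have "(p v* T, r v* T) \<in> R" by (rule G[OF pr T(1)])
    thus "(cj r, cj p) \<in> R" using T(2,3) by simp
  qed
qed

lemma cnt_GU:
  fixes Ri Rj :: "(('a::{field,finite}^'n) \<times> ('a^'n)) set"
  assumes c4: "CARD('a) = 4" and n2: "CARD('n) \<ge> 2" and Ri: "Ri \<in> orbitals 2" and Rj: "Rj \<in> orbitals 2"
    and U: "U \<in> GU 2"
  shows "card {z \<in> Phi 2. (p v* U, z) \<in> Ri \<and> (z, r v* U) \<in> Rj} = card {z \<in> Phi 2. (p, z) \<in> Ri \<and> (z, r) \<in> Rj}"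
proof -
  have fr: "\<And>a b::'a. (a+b)^2 = a^2+b^2" by (rule F4_fr[OF c4])
  have inv: "\<And>a::'a. a^(2*2) = a" using F4_p4[OF c4] by simp
  have q0: "(2::nat) > 0" by simp
  define V where "V = conj_transpose 2 U"
  have V: "V \<in> GU 2" unfolding V_def by (rule GU_ct[OF inv U])
  have UV: "w v* U v* V = w" for w unfolding V_def by (rule GU_rinv[OF U])
  have VU: "w v* V v* U = w" for w
    using GU_rinv[OF V, of w] ct_ct[OF inv, of U] by (simp add: V_def)
  let ?A = "{z \<in> Phi 2. (p, z) \<in> Ri \<and> (z, r) \<in> Rj}"
  let ?B = "{z \<in> Phi 2. (p v* U, z) \<in> Ri \<and> (z, r v* U) \<in> Rj}"
  have "bij_betw (\<lambda>z. z v* U) ?A ?B"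
  proof (rule bij_betw_byWitness[where f'="\<lambda>z. z v* V"])
    show "\<forall>a\<in>?A. a v* U v* V = a" using UV by simp
    show "\<forall>a\<in>?B. a v* V v* U = a" using VU by simp
    show "(\<lambda>z. z v* U) ` ?A \<subseteq> ?B"
    proof
      fix w assume "w \<in> (\<lambda>z. z v* U) ` ?A"
      then obtain z where z: "z \<in> Phi 2" "(p, z) \<in> Ri" "(z, r) \<in> Rj" "w = z v* U" by blast
      have 1: "(p v* U, z v* U) \<in> Ri" by (rule orb_GU[OF c4 n2 Ri z(2) U])
      have 2: "(z v* U, r v* U) \<in> Rj" by (rule orb_GU[OF c4 n2 Rj z(3) U])
      have 3: "z v* U \<in> Phi 2" by (rule Phi_GU[OF fr q0 U z(1)])
      show "w \<in> ?B" unfolding z(4) using 1 2 3 by blast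
    qed
    show "(\<lambda>z. z v* V) ` ?B \<subseteq> ?A"
    proof
      fix w assume "w \<in> (\<lambda>z. z v* V) ` ?B"
      then obtain z where z: "z \<in> Phi 2" "(p v* U, z) \<in> Ri" "(z, r v* U) \<in> Rj" "w = z v* V" by blast
      have 1: "(p v* U v* V, z v* V) \<in> Ri" by (rule orb_GU[OF c4 n2 Ri z(2) V])
      have 2: "(z v* V, r v* U v* V) \<in> Rj" by (rule orb_GU[OF c4 n2 Rj z(3) V])
      have 3: "z v* V \<in> Phi 2" by (rule Phi_GU[OF fr q0 V z(1)])
      show "w \<in> ?A" unfolding z(4) using 1 2 3 UV[of p] UV[of r] by simp
    qed
  qed
  from bij_betw_same_card[OF this] show ?thesis by simp
qed

lemma cnt_cj:
  fixes Ri Rj :: "(('a::{field,finite}^'n) \<times> ('a^'n)) set"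
  assumes c4: "CARD('a) = 4" and n2: "CARD('n) \<ge> 2" and Ri: "Ri \<in> orbitals 2" and Rj: "Rj \<in> orbitals 2"
  shows "card {z \<in> Phi 2. (p, z) \<in> Ri \<and> (z, r) \<in> Rj} = card {z \<in> Phi 2. (cj r, z) \<in> Rj \<and> (z, cj p) \<in> Ri}"
proof -
  let ?A = "{z \<in> Phi 2. (p, z) \<in> Ri \<and> (z, r) \<in> Rj}"
  let ?B = "{z \<in> Phi 2. (cj r, z) \<in> Rj \<and> (z, cj p) \<in> Ri}"
  have cc: "\<And>v::'a^'n. cj (cj v) = v" by (rule cj_cj[OF c4])
  have "bij_betw cj ?A ?B"
  proof (rule bij_betw_byWitness[where f'=cj])
    show "\<forall>a\<in>?A. cj (cj a) = a" using cc by simp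
    show "\<forall>a\<in>?B. cj (cj a) = a" using cc by simp
    show "cj ` ?A \<subseteq> ?B"
    proof
      fix w assume "w \<in> cj ` ?A"
      then obtain z where z: "z \<in> Phi 2" "(p, z) \<in> Ri" "(z, r) \<in> Rj" "w = cj z" by blast
      have 1: "(cj z, cj p) \<in> Ri" by (rule orb_cj[OF c4 n2 Ri z(2)])
      have 2: "(cj r, cj z) \<in> Rj" by (rule orb_cj[OF c4 n2 Rj z(3)])
      have 3: "cj z \<in> Phi 2" by (rule cj_Phi[OF c4 z(1)])
      show "w \<in> ?B" unfolding z(4) using 1 2 3 by blast
    qed
    show "cj ` ?B \<subseteq> ?A"
    proof
      fix w assume "w \<in> cj ` ?B"
      then obtain z where z: "z \<in> Phi 2" "(cj r, z) \<in> Rj" "(z, cj p) \<in> Ri" "w = cj z" by blast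
      have 1: "(cj (cj p), cj z) \<in> Ri" by (rule orb_cj[OF c4 n2 Ri z(3)])
      have 2: "(cj z, cj (cj r)) \<in> Rj" by (rule orb_cj[OF c4 n2 Rj z(2)])
      have 3: "cj z \<in> Phi 2" by (rule cj_Phi[OF c4 z(1)])
      show "w \<in> ?A" unfolding z(4) using 1 2 3 cc[of p] cc[of r] by simp
    qed
  qed
  from bij_betw_same_card[OF this] show ?thesis by simp
qed

theorem dir2:
  assumes c4: "CARD('a::{field,finite}) = 4" and n2: "CARD('n::finite) \<ge> 2"
  shows "commutative_scheme 2 TYPE('a ^ 'n)"
  unfolding commutative_scheme_def
proof (intro ballI)
  fix Rh Ri Rj :: "(('a^'n) \<times> ('a^'n)) set"
  assume Rh: "Rh \<in> orbitals 2" and Ri: "Ri \<in> orbitals 2" and Rj: "Rj \<in> orbitals 2"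
  obtain x0 y0 where R0: "Rh = orbital 2 x0 y0" "x0 \<in> Phi 2" "y0 \<in> Phi 2"
    using Rh unfolding orbitals_def by blast
  have "(x0, y0) \<in> Rh" unfolding R0 by (rule orbital_self) simp
  hence "(SOME p. p \<in> Rh) \<in> Rh" by (rule someI)
  then obtain p r where sp: "(SOME p. p \<in> Rh) = (p, r)" and pr: "(p, r) \<in> Rh" by (metis surj_pair)
  obtain U1 where U1: "U1 \<in> GU 2" "p = x0 v* U1" "r = y0 v* U1" using pr R0 unfolding orbital_def by auto
  have "(cj r, cj p) \<in> Rh" by (rule orb_cj[OF c4 n2 Rh pr])
  then obtain U2 where U2: "U2 \<in> GU 2" "cj r = x0 v* U2" "cj p = y0 v* U2" using R0 unfolding orbital_def by auto
  have "isect_num 2 Rh Ri Rj = card {z \<in> Phi 2. (p, z) \<in> Ri \<and> (z, r) \<in> Rj}"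
    by (simp add: isect_num_def sp)
  also have "\<dots> = card {z \<in> Phi 2. (cj r, z) \<in> Rj \<and> (z, cj p) \<in> Ri}" by (rule cnt_cj[OF c4 n2 Ri Rj])
  also have "\<dots> = card {z \<in> Phi 2. (x0, z) \<in> Rj \<and> (z, y0) \<in> Ri}"
    unfolding U2 by (rule cnt_GU[OF c4 n2 Rj Ri U2(1)])
  also have "\<dots> = card {z \<in> Phi 2. (p, z) \<in> Rj \<and> (z, r) \<in> Ri}"
    unfolding U1 by (rule cnt_GU[OF c4 n2 Rj Ri U1(1), symmetric])
  also have "\<dots> = isect_num 2 Rh Rj Ri" by (simp add: isect_num_def sp)
  finally show "isect_num 2 Rh Ri Rj = isect_num 2 Rh Rj Ri" .
qed

theorem theorem4p1:
  fixes q :: nat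
  assumes "prime_power q"
    and "CARD('a::{field,finite}) = q ^ 2"
    and "CARD('n::finite) \<ge> 2"
  shows "commutative_scheme q TYPE('a ^ 'n) \<longleftrightarrow> q = 2"
proof
  assume "commutative_scheme q TYPE('a ^ 'n)"
  thus "q = 2" by (rule dir1[OF assms])
next
  assume q: "q = 2"
  have "CARD('a) = 4" using assms(2) q by simp
  hence "commutative_scheme 2 TYPE('a ^ 'n)" by (rule dir2[OF _ assms(3)])
  thus "commutative_scheme q TYPE('a ^ 'n)" using q by simp
qed

end
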